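(* Let $p$ be a prime, $n\ge 3$, $N$ a positive integer, $T=(n-1)(n-2)/2+2(n-1)$, $v_1,v_2\in\mathbb{Z}_p^T$ fixed, $K,M$ independent uniform random vectors on $\mathbb{Z}_p^T$, and $D(x)=(2-x)v_1+(x-1)v_2+(x-1)(x-2)(K+xM)$. Let $\mathcal A:\mathbb{Z}_p^T\to\mathbb{Z}_p$ be an algorithm (a fixed function) whose success probability $q=\mathbb{P}(\mathcal A(\mathbf U)=Z_{n-1}(\mathbf U;p))$ is positive, where $\mathbf U$ is uniform on $\mathbb{Z}_p^T$. Let $\mathcal N$ be the number of $x\in\{3,4,\dots,p\}$ with $\mathcal A(D(x))=Z_{n-1}(D(x);p)$. Then $$\mathbb{P}\big(\mathcal N\ge (p-2)q/2\big)\ge 1-\frac{1}{(p-2)q^2},$$ where the probability is over $K$ and $M$.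
   Context: Arithmetic is in $\mathbb{Z}_p$; elements of $\{3,\dots,p\}$ are viewed as residues mod $p$. For $\boldsymbol\sigma\in\{-1,1\}^{m}$, $I_m(\boldsymbol\sigma)=|\{(i,j):1\le i<j\le m,\ \sigma_i\ne\sigma_j\}|$ and $f(m,\boldsymbol\sigma)=\frac{m(m-1)}2-m-I_m(\boldsymbol\sigma)$. A vector in $\mathbb{Z}_p^T$ with $T=m(m-1)/2+2m$ is read as $(\mathbf J,\mathbf B,\mathbf C)$ (first $m(m-1)/2$ coordinates are $J_{ij}$, $1\le i<j\le m$, then $B_1,\dots,B_m$, then $C_1,\dots,C_m$), and $$Z_m(\mathbf J,\mathbf B,\mathbf C;p)=\sum_{\boldsymbol\sigma\in\{-1,1\}^m}2^{Nf(m,\boldsymbol\sigma)}\Big(\prod_{i:\sigma_i=-1}B_i\Big)\Big(\prod_{i:\sigma_i=+1}C_i\Big)\Big(\prod_{i<j:\sigma_i\ne\sigma_j}J_{ij}\Big)\pmod p.$$ *)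

theory Defs
  imports Complex_Main "HOL-Library.FuncSet" "HOL-Computational_Algebra.Primes"
begin

text \<open>Vectors of Z_p^T are represented as int lists of length T with entries in {0..<p}.\<close>
definition vecs :: "nat \<Rightarrow> nat \<Rightarrow> int list set" where
  "vecs p T = {u. length u = T \<and> set u \<subseteq> {0..<int p}}"

definition dimT :: "nat \<Rightarrow> nat" where
  "dimT m = m * (m - 1) div 2 + 2 * m"

text \<open>0-based position of J_ij (1 \<le> i < j \<le> m), lexicographic order (1,2),(1,3),...,(1,m),(2,3),...\<close>
definition Jidx :: "nat \<Rightarrow> nat \<Rightarrow> nat \<Rightarrow> nat" where
  "Jidx m i j = (i - 1) * (2 * m - i) div 2 + (j - i) - 1"

definition Jc :: "nat \<Rightarrow> int list \<Rightarrow> nat \<Rightarrow> nat \<Rightarrow> int" where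
  "Jc m u i j = u ! Jidx m i j"
definition Bc :: "nat \<Rightarrow> int list \<Rightarrow> nat \<Rightarrow> int" where
  "Bc m u i = u ! (m * (m - 1) div 2 + i - 1)"
definition Cc :: "nat \<Rightarrow> int list \<Rightarrow> nat \<Rightarrow> int" where
  "Cc m u i = u ! (m * (m - 1) div 2 + m + i - 1)"

definition spins :: "nat \<Rightarrow> (nat \<Rightarrow> int) set" where
  "spins m = ({1..m} \<rightarrow>\<^sub>E {-1, 1})"

definition disagree :: "nat \<Rightarrow> (nat \<Rightarrow> int) \<Rightarrow> (nat \<times> nat) set" where
  "disagree m \<sigma> = {(i, j). 1 \<le> i \<and> i < j \<and> j \<le> m \<and> \<sigma> i \<noteq> \<sigma> j}"

definition Icnt :: "nat \<Rightarrow> (nat \<Rightarrow> int) \<Rightarrow> nat" where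
  "Icnt m \<sigma> = card (disagree m \<sigma>)"

definition fexp :: "nat \<Rightarrow> (nat \<Rightarrow> int) \<Rightarrow> int" where
  "fexp m \<sigma> = int (m * (m - 1) div 2) - int m - int (Icnt m \<sigma>)"

text \<open>2^k in Z_p for integer k; negative powers use the inverse (p+1)/2 of 2 modulo an odd p.\<close>
definition pow2 :: "nat \<Rightarrow> int \<Rightarrow> int" where
  "pow2 p k = (if k \<ge> 0 then 2 ^ nat k mod int p
               else ((int p + 1) div 2) ^ nat (- k) mod int p)"

definition Zm :: "nat \<Rightarrow> nat \<Rightarrow> nat \<Rightarrow> int list \<Rightarrow> int" where
  "Zm N p m u =
     (\<Sum>\<sigma>\<in>spins m. pow2 p (int N * fexp m \<sigma>)
        * (\<Prod>i\<in>{i\<in>{1..m}. \<sigma> i = -1}. Bc m u i)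
        * (\<Prod>i\<in>{i\<in>{1..m}. \<sigma> i = 1}. Cc m u i)
        * (\<Prod>(i, j)\<in>disagree m \<sigma>. Jc m u i j)) mod int p"

definition Dvec :: "nat \<Rightarrow> int list \<Rightarrow> int list \<Rightarrow> int list \<Rightarrow> int list \<Rightarrow> int \<Rightarrow> int list" where
  "Dvec p v1 v2 K M x =
     map (\<lambda>k. ((2 - x) * v1 ! k + (x - 1) * v2 ! k
               + (x - 1) * (x - 2) * (K ! k + x * M ! k)) mod int p) [0..<length v1]"

end

theory Submission
  imports Defs
begin

lemma eq_of_dvd_range:
  fixes a b p :: int
  assumes "0 \<le> a" "a < p" "0 \<le> b" "b < p" "p dvd (a - b)"
  shows "a = b"
proof -
  have "a mod p = b mod p" using assms(5) by (simp add: mod_eq_dvd_iff)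
  then show ?thesis using assms by simp
qed

lemma cancel_c:
  fixes x e a b :: int
  assumes "prime p" "3 \<le> x" "x \<le> int p"
    and "(e + (x - 1) * (x - 2) * a) mod int p = (e + (x - 1) * (x - 2) * b) mod int p"
  shows "int p dvd (a - b)"
proof -
  have pr: "prime (int p)" using assms(1) by simp
  have "int p dvd ((e + (x - 1) * (x - 2) * a) - (e + (x - 1) * (x - 2) * b))"
    using assms(4) by (simp add: mod_eq_dvd_iff)
  moreover have "(e + (x - 1) * (x - 2) * a) - (e + (x - 1) * (x - 2) * b) = (x - 1) * ((x - 2) * (a - b))"
    by (simp add: algebra_simps)
  ultimately have d: "int p dvd (x - 1) * ((x - 2) * (a - b))" by simp
  have n1: "\<not> int p dvd (x - 1)" using assms(2,3) by (intro zdvd_not_zless) auto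
  have n2: "\<not> int p dvd (x - 2)" using assms(2,3) by (intro zdvd_not_zless) auto
  show ?thesis using d n1 n2 pr by (simp add: prime_dvd_mult_iff)
qed

lemma D_nth:
  "k < length v1 \<Longrightarrow> Dvec p v1 v2 K M x ! k =
     ((2 - x) * v1 ! k + (x - 1) * v2 ! k + (x - 1) * (x - 2) * (K ! k + x * M ! k)) mod int p"
  by (simp add: Dvec_def)

lemma D_len: "length (Dvec p v1 v2 K M x) = length v1"
  by (simp add: Dvec_def)

lemma D_in:
  assumes "length v1 = T" "p > 0"
  shows "Dvec p v1 v2 K M x \<in> vecs p T"
  using assms by (auto simp: vecs_def Dvec_def)

lemma vecs_nth:
  "u \<in> vecs p T \<Longrightarrow> k < T \<Longrightarrow> 0 \<le> u ! k \<and> u ! k < int p"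
  unfolding vecs_def using nth_mem by fastforce

lemma finite_vecs: "finite (vecs p T)"
proof -
  have "vecs p T = {xs. set xs \<subseteq> {0..<int p} \<and> length xs = T}"
    by (auto simp: vecs_def)
  then show ?thesis using finite_lists_length_eq[of "{0..<int p}" T] by simp
qed

lemma D_dvd:
  assumes "prime p" "3 \<le> x" "x \<le> int p" "k < length v1"
    and "Dvec p v1 v2 K M x = Dvec p v1 v2 K' M' x"
  shows "int p dvd ((K ! k + x * M ! k) - (K' ! k + x * M' ! k))"
proof -
  have "Dvec p v1 v2 K M x ! k = Dvec p v1 v2 K' M' x ! k" using assms(5) by simp
  then show ?thesis using assms(4) D_nth[of k v1 p v2]
    by (intro cancel_c[OF assms(1,2,3), where e = "(2 - x) * v1 ! k + (x - 1) * v2 ! k"]) simp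
qed


lemma reindex_endo:
  assumes "finite S" "h ` S \<subseteq> S" "inj_on h S"
  shows "(\<Sum>s\<in>S. g (h s)) = (\<Sum>s\<in>S. g s)"
proof -
  have "h ` S = S" using endo_inj_surj[OF assms] .
  then show ?thesis using sum.reindex[OF assms(3), of g] by simp
qed

lemma sum_one:
  assumes "prime p" "3 \<le> x" "x \<le> int p" "length v1 = T"
  shows "(\<Sum>s\<in>vecs p T \<times> vecs p T. (f (Dvec p v1 v2 (fst s) (snd s) x) :: real))
       = (\<Sum>s\<in>vecs p T \<times> vecs p T. f (fst s))"
proof -
  let ?V = "vecs p T"
  let ?h = "\<lambda>s. (Dvec p v1 v2 (fst s) (snd s) x, snd s)"
  have p0: "p > 0" using assms(1) prime_gt_0_nat by blast
  have "(\<Sum>s\<in>?V \<times> ?V. f (fst (?h s))) = (\<Sum>s\<in>?V \<times> ?V. f (fst s))"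
  proof (rule reindex_endo)
    show "finite (?V \<times> ?V)" using finite_vecs by simp
    show "?h ` (?V \<times> ?V) \<subseteq> ?V \<times> ?V" using D_in[OF assms(4) p0] by auto
    show "inj_on ?h (?V \<times> ?V)"
    proof (rule inj_onI)
      fix s t assume s: "s \<in> ?V \<times> ?V" and t: "t \<in> ?V \<times> ?V" and e: "?h s = ?h t"
      obtain K M where sK: "s = (K, M)" by (cases s)
      obtain K' M' where tK: "t = (K', M')" by (cases t)
      have EE: "Dvec p v1 v2 K M x = Dvec p v1 v2 K' M' x \<and> M = M'" using e sK tK by auto
      have MM: "M = M'" using EE by (rule conjunct2)
      have DD: "Dvec p v1 v2 K M x = Dvec p v1 v2 K' M' x" using EE by (rule conjunct1)
      have "K = K'"
      proof (rule nth_equalityI)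
        show "length K = length K'" using s t sK tK by (simp add: vecs_def)
        fix k assume "k < length K"
        then have k: "k < T" using s sK by (simp add: vecs_def)
        have "int p dvd ((K ! k + x * M ! k) - (K' ! k + x * M' ! k))"
          using D_dvd[OF assms(1,2,3) _ DD] k assms(4) by simp
        then have "int p dvd (K ! k - K' ! k)" using MM by simp
        then show "K ! k = K' ! k"
          using vecs_nth[of K p T k] vecs_nth[of K' p T k] s t sK tK k
          by (intro eq_of_dvd_range[of _ "int p"]) auto
      qed
      then show "s = t" using sK tK MM by simp
    qed
  qed
  then show ?thesis by simp
qed

lemma sum_two:
  assumes "prime p" "3 \<le> x" "x \<le> int p" "3 \<le> y" "y \<le> int p" "x \<noteq> y" "length v1 = T"
  shows "(\<Sum>s\<in>vecs p T \<times> vecs p T. (f (Dvec p v1 v2 (fst s) (snd s) x) :: real)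
            * f (Dvec p v1 v2 (fst s) (snd s) y))
       = (\<Sum>s\<in>vecs p T \<times> vecs p T. f (fst s) * f (snd s))"
proof -
  let ?V = "vecs p T"
  let ?h = "\<lambda>s. (Dvec p v1 v2 (fst s) (snd s) x, Dvec p v1 v2 (fst s) (snd s) y)"
  have p0: "p > 0" using assms(1) prime_gt_0_nat by blast
  have "(\<Sum>s\<in>?V \<times> ?V. f (fst (?h s)) * f (snd (?h s))) = (\<Sum>s\<in>?V \<times> ?V. f (fst s) * f (snd s))"
  proof (rule reindex_endo[where g = "\<lambda>s. f (fst s) * f (snd s)"])
    show "finite (?V \<times> ?V)" using finite_vecs by simp
    show "?h ` (?V \<times> ?V) \<subseteq> ?V \<times> ?V" using D_in[OF assms(7) p0] by auto
    show "inj_on ?h (?V \<times> ?V)"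
    proof (rule inj_onI)
      fix s t assume s: "s \<in> ?V \<times> ?V" and t: "t \<in> ?V \<times> ?V" and e: "?h s = ?h t"
      obtain K M where sK: "s = (K, M)" by (cases s)
      obtain K' M' where tK: "t = (K', M')" by (cases t)
      have DX: "Dvec p v1 v2 K M x = Dvec p v1 v2 K' M' x" using e sK tK by simp
      have DY: "Dvec p v1 v2 K M y = Dvec p v1 v2 K' M' y" using e sK tK by simp
      have nxy: "\<not> int p dvd (x - y)"
      proof
        assume "int p dvd (x - y)"
        moreover have "\<not> int p dvd (x - y)" if "x > y"
          using that assms by (intro zdvd_not_zless) auto
        moreover have "\<not> int p dvd (y - x)" if "y > x"
          using that assms by (intro zdvd_not_zless) auto
        ultimately show False using assms(6)
          by (metis dvd_diff_commute linorder_neqE_linordered_idom)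
      qed
      have lK: "length K = T" "length K' = T" "length M = T" "length M' = T"
        using s t sK tK by (auto simp: vecs_def)
      have both: "M ! k = M' ! k \<and> K ! k = K' ! k" if k: "k < T" for k
      proof -
        have d1: "int p dvd ((K ! k + x * M ! k) - (K' ! k + x * M' ! k))"
          using D_dvd[OF assms(1,2,3) _ DX] k assms(7) by simp
        have d2: "int p dvd ((K ! k + y * M ! k) - (K' ! k + y * M' ! k))"
          using D_dvd[OF assms(1,4,5) _ DY] k assms(7) by simp
        have "int p dvd ((K ! k + x * M ! k) - (K' ! k + x * M' ! k))
                        - ((K ! k + y * M ! k) - (K' ! k + y * M' ! k))"
          using d1 d2 by (rule dvd_diff)
        moreover have "((K ! k + x * M ! k) - (K' ! k + x * M' ! k))
                        - ((K ! k + y * M ! k) - (K' ! k + y * M' ! k)) = (x - y) * (M ! k - M' ! k)"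
          by (simp add: algebra_simps)
        ultimately have "int p dvd (x - y) * (M ! k - M' ! k)" by simp
        then have "int p dvd (M ! k - M' ! k)"
          using nxy assms(1) by (simp add: prime_dvd_mult_iff)
        then have mm: "M ! k = M' ! k"
          using vecs_nth[of M p T k] vecs_nth[of M' p T k] s t sK tK k
          by (intro eq_of_dvd_range[of _ "int p"]) auto
        then have "int p dvd (K ! k - K' ! k)" using d1 by simp
        then have "K ! k = K' ! k"
          using vecs_nth[of K p T k] vecs_nth[of K' p T k] s t sK tK k
          by (intro eq_of_dvd_range[of _ "int p"]) auto
        then show ?thesis using mm by simp
      qed
      have "K = K'" using both lK by (intro nth_equalityI) auto
      moreover have "M = M'" using both lK by (intro nth_equalityI) auto
      ultimately show "s = t" using sK tK by simp
    qed
  qed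
  then show ?thesis by simp
qed


lemma card_filter_sum:
  "finite A \<Longrightarrow> real (card {a \<in> A. P a}) = (\<Sum>a\<in>A. if P a then 1 else 0)"
proof -
  assume fA: "finite A"
  have "real (card {a \<in> A. P a}) = (\<Sum>a\<in>{a \<in> A. P a}. 1)" by simp
  also have "\<dots> = (\<Sum>a\<in>A. if P a then 1 else 0)" by (rule sum.inter_filter[OF fA])
  finally show ?thesis .
qed

lemma sum_prod_split:
  "finite A \<Longrightarrow> finite B \<Longrightarrow>
   (\<Sum>s\<in>A \<times> B. (h (fst s) :: real) * k (snd s)) = (\<Sum>a\<in>A. h a) * (\<Sum>b\<in>B. k b)"
proof -
  have "(\<Sum>s\<in>A \<times> B. (h (fst s) :: real) * k (snd s)) = (\<Sum>(a, b)\<in>A \<times> B. h a * k b)"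
    by (simp add: split_def)
  also have "\<dots> = (\<Sum>a\<in>A. \<Sum>b\<in>B. h a * k b)" by (rule sum.cartesian_product[symmetric])
  also have "\<dots> = (\<Sum>a\<in>A. h a) * (\<Sum>b\<in>B. k b)" by (rule sum_product[symmetric])
  finally show ?thesis .
qed

lemma main_abstract:
  fixes P :: "int list \<Rightarrow> bool" and q :: real
  assumes pr: "prime p" and lv: "length v1 = T"
    and qd: "q = real (card {U \<in> vecs p T. P U}) / real (card (vecs p T))"
    and qpos: "q > 0"
  shows "real (card {(K, M) \<in> vecs p T \<times> vecs p T.
             real (card {x \<in> {3..int p}. P (Dvec p v1 v2 K M x)}) \<ge> (real p - 2) * q / 2})
         / real (card (vecs p T \<times> vecs p T))
         \<ge> 1 - 1 / ((real p - 2) * q ^ 2)"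
proof -
  define V where "V = vecs p T"
  define S where "S = V \<times> V"
  define I where "I = {3..int p}"
  define f where "f U = (if P U then 1 else 0 :: real)" for U
  define X where "X x s = f (Dvec p v1 v2 (fst s) (snd s) x)" for x s
  define Nf where "Nf s = (\<Sum>x\<in>I. X x s)" for s
  define g where "g = real (card {U \<in> V. P U})"
  define v where "v = real (card V)"
  define n0 where "n0 = real p - 2"
  define \<mu> where "\<mu> = n0 * q"
  have p2: "p \<ge> 2" using pr prime_ge_2_nat by blast
  have finV: "finite V" unfolding V_def by (rule finite_vecs)
  have finS: "finite S" unfolding S_def using finV by simp
  have finI: "finite I" unfolding I_def by simp
  have cI: "card I = p - 2" unfolding I_def by simp
  have cardI: "real (card I) = n0" unfolding cI n0_def using p2 by (simp add: of_nat_diff)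
  have "replicate T 0 \<in> V" unfolding V_def vecs_def using p2 by auto
  then have "V \<noteq> {}" by blast
  then have "card V > 0" using finV by (simp add: card_gt_0_iff)
  then have vpos: "v > 0" unfolding v_def by simp
  have cardS: "real (card S) = v * v" unfolding S_def v_def by (simp add: card_cartesian_product)
  have sumf: "(\<Sum>a\<in>V. f a) = g" unfolding f_def g_def using card_filter_sum[OF finV] by simp
  have qv: "q = g / v" using qd unfolding g_def v_def V_def by simp
  have gpos: "g > 0" using qpos vpos qv by (auto simp: zero_less_divide_iff)
  have "card {U \<in> V. P U} \<le> card V" using finV by (intro card_mono) auto
  then have gv: "g \<le> v" unfolding g_def v_def by simp
  have Nf_eq: "Nf (K, M) = real (card {x \<in> I. P (Dvec p v1 v2 K M x)})" for K M
    unfolding Nf_def X_def f_def using card_filter_sum[OF finI] by simp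
  have X01: "X x s * X x s = X x s" for x s unfolding X_def f_def by simp
  have Xnn: "X x s \<ge> 0" for x s unfolding X_def f_def by simp
  have L1: "(\<Sum>s\<in>S. X x s) = g * v" if "x \<in> I" for x
  proof -
    have "(\<Sum>s\<in>S. X x s) = (\<Sum>s\<in>V \<times> V. f (fst s) * (\<lambda>_. 1) (snd s))"
      unfolding S_def X_def V_def using that I_def sum_one[OF pr _ _ lv, of x f v2] by simp
    also have "\<dots> = g * v" using sum_prod_split[OF finV finV, of f "\<lambda>_. 1"] sumf v_def by simp
    finally show ?thesis .
  qed
  have L2: "(\<Sum>s\<in>S. X x s * X y s) = g * g" if "x \<in> I" "y \<in> I" "x \<noteq> y" for x y
  proof -
    have "(\<Sum>s\<in>S. X x s * X y s) = (\<Sum>s\<in>V \<times> V. f (fst s) * f (snd s))"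
      unfolding S_def X_def V_def using that I_def sum_two[OF pr _ _ _ _ _ lv, of x y f v2] by simp
    also have "\<dots> = g * g" using sum_prod_split[OF finV finV] sumf by simp
    finally show ?thesis .
  qed
  have S1: "(\<Sum>s\<in>S. Nf s) = n0 * g * v"
  proof -
    have "(\<Sum>s\<in>S. Nf s) = (\<Sum>x\<in>I. \<Sum>s\<in>S. X x s)" unfolding Nf_def by (rule sum.swap)
    also have "\<dots> = (\<Sum>x\<in>I. g * v)" using L1 by simp
    also have "\<dots> = n0 * g * v" using cardI by simp
    finally show ?thesis .
  qed
  have inner: "(\<Sum>y\<in>I. \<Sum>s\<in>S. X x s * X y s) = g * v + (n0 - 1) * (g * g)" if xI: "x \<in> I" for x
  proof -
    have "(\<Sum>y\<in>I. \<Sum>s\<in>S. X x s * X y s)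
          = (\<Sum>s\<in>S. X x s * X x s) + (\<Sum>y\<in>I - {x}. \<Sum>s\<in>S. X x s * X y s)"
      using sum.remove[OF finI xI] by simp
    also have "\<dots> = g * v + (\<Sum>y\<in>I - {x}. g * g)"
    proof -
      have a: "(\<Sum>s\<in>S. X x s * X x s) = g * v" unfolding X01 using L1[OF xI] .
      have b: "(\<Sum>y\<in>I - {x}. \<Sum>s\<in>S. X x s * X y s) = (\<Sum>y\<in>I - {x}. g * g)"
        using L2[OF xI] by (intro sum.cong) auto
      show ?thesis using a b by simp
    qed
    also have "\<dots> = g * v + (n0 - 1) * (g * g)"
    proof -
      have "card I \<noteq> 0" using xI finI by auto
      then have "card I \<ge> 1" by simp
      then have "real (card (I - {x})) = n0 - 1" using cardI xI finI by (simp add: of_nat_diff)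
      then show ?thesis by simp
    qed
    finally show ?thesis .
  qed
  have S2: "(\<Sum>s\<in>S. Nf s ^ 2) = n0 * (g * v + (n0 - 1) * (g * g))"
  proof -
    have "(\<Sum>s\<in>S. Nf s ^ 2) = (\<Sum>s\<in>S. \<Sum>x\<in>I. \<Sum>y\<in>I. X x s * X y s)"
      unfolding Nf_def power2_eq_square by (simp add: sum_product)
    also have "\<dots> = (\<Sum>x\<in>I. \<Sum>s\<in>S. \<Sum>y\<in>I. X x s * X y s)" by (rule sum.swap)
    also have "\<dots> = (\<Sum>x\<in>I. \<Sum>y\<in>I. \<Sum>s\<in>S. X x s * X y s)"
      by (rule sum.cong[OF refl], rule sum.swap)
    also have "\<dots> = (\<Sum>x\<in>I. g * v + (n0 - 1) * (g * g))" using inner by simp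
    also have "\<dots> = n0 * (g * v + (n0 - 1) * (g * g))" using cardI by simp
    finally show ?thesis .
  qed
  have Var: "(\<Sum>s\<in>S. (Nf s - \<mu>) ^ 2) = n0 * g * (v - g)"
  proof -
    have "(\<Sum>s\<in>S. (Nf s - \<mu>) ^ 2) = (\<Sum>s\<in>S. Nf s ^ 2) - 2 * \<mu> * (\<Sum>s\<in>S. Nf s) + \<mu> ^ 2 * real (card S)"
    proof -
      have e: "(Nf s - \<mu>) ^ 2 = (Nf s ^ 2 - (2 * \<mu>) * Nf s) + \<mu> ^ 2" for s
        by (simp add: power2_diff)
      have "(\<Sum>s\<in>S. (Nf s - \<mu>) ^ 2) = (\<Sum>s\<in>S. Nf s ^ 2) - (\<Sum>s\<in>S. (2 * \<mu>) * Nf s) + (\<Sum>s\<in>S. \<mu> ^ 2)"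
        unfolding e by (simp only: sum.distrib sum_subtractf)
      also have "(\<Sum>s\<in>S. (2 * \<mu>) * Nf s) = 2 * \<mu> * (\<Sum>s\<in>S. Nf s)"
        by (rule sum_distrib_left[symmetric])
      finally show ?thesis by simp
    qed
    also have "\<dots> = n0 * g * (v - g)"
      unfolding S1 S2 cardS \<mu>_def qv using vpos by (simp add: field_simps power2_eq_square)
    finally show ?thesis .
  qed
  have n0nn: "n0 \<ge> 0" unfolding n0_def using p2 by simp
  have munn: "\<mu> \<ge> 0" unfolding \<mu>_def using n0nn qpos by simp
  have Nnn: "Nf s \<ge> 0" for s unfolding Nf_def using Xnn by (simp add: sum_nonneg)
  define B where "B = {s \<in> S. Nf s < \<mu> / 2}"
  define G where "G = {s \<in> S. Nf s \<ge> \<mu> / 2}"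
  have finB: "finite B" unfolding B_def using finS by simp
  have cardGB: "real (card G) = v * v - real (card B)"
  proof -
    have "G \<union> B = S" "G \<inter> B = {}" unfolding G_def B_def by auto
    then have "card G + card B = card S" using finS
      by (metis card_Un_disjoint finite_Un)
    then show ?thesis using cardS by (metis add_diff_cancel_right' of_nat_add)
  qed
  have Bbound: "real (card B) * (\<mu> / 2) ^ 2 \<le> n0 * g * (v - g)"
  proof -
    have "real (card B) * (\<mu> / 2) ^ 2 = (\<Sum>s\<in>B. (\<mu> / 2) ^ 2)" by simp
    also have "\<dots> \<le> (\<Sum>s\<in>B. (Nf s - \<mu>) ^ 2)"
    proof (rule sum_mono)
      fix s assume "s \<in> B"
      then have "Nf s < \<mu> / 2" unfolding B_def by simp
      then have "\<mu> / 2 \<le> \<mu> - Nf s" "0 \<le> \<mu> / 2" using Nnn[of s] munn by auto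
      then have "(\<mu> / 2) ^ 2 \<le> (\<mu> - Nf s) ^ 2" by (rule power_mono)
      then show "(\<mu> / 2) ^ 2 \<le> (Nf s - \<mu>) ^ 2" by (simp add: power2_commute)
    qed
    also have "\<dots> \<le> (\<Sum>s\<in>S. (Nf s - \<mu>) ^ 2)"
      by (rule sum_mono2[OF finS]) (auto simp: B_def)
    finally show ?thesis using Var by simp
  qed
  have goalset: "{(K, M) \<in> vecs p T \<times> vecs p T.
             real (card {x \<in> {3..int p}. P (Dvec p v1 v2 K M x)}) \<ge> (real p - 2) * q / 2} = G"
    unfolding G_def S_def V_def I_def \<mu>_def n0_def using Nf_eq[unfolded I_def] by auto
  have main: "real (card G) / (v * v) \<ge> 1 - 1 / (n0 * q ^ 2)"
  proof (cases "n0 = 0")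
    case True
    then have "B = {}" unfolding B_def \<mu>_def using Nnn by (auto simp: not_less)
    then show ?thesis using cardGB True vpos by simp
  next
    case False
    then have n0p: "n0 > 0" using n0nn by simp
    have "real (card B) * n0 * g ^ 2 \<le> 4 * v ^ 2 * g * (v - g)"
    proof -
      have "real (card B) * (n0 * g / v / 2) ^ 2 \<le> n0 * g * (v - g)"
        using Bbound unfolding \<mu>_def qv by simp
      then have "real (card B) * (n0 * g) ^ 2 \<le> 4 * v ^ 2 * (n0 * g * (v - g))"
        using vpos by (simp add: field_simps power2_eq_square)
      then have "n0 * (real (card B) * n0 * g ^ 2) \<le> n0 * (4 * v ^ 2 * g * (v - g))"
        by (simp add: algebra_simps power2_eq_square)
      then show ?thesis using n0p by simp
    qed
    also have "\<dots> \<le> v ^ 4"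
    proof -
      have "0 \<le> v ^ 2 * (v - 2 * g) ^ 2" by simp
      then show ?thesis by (simp add: algebra_simps power2_eq_square power4_eq_xxxx)
    qed
    finally have cb: "real (card B) * n0 * g ^ 2 \<le> v ^ 4" .
    have "real (card B) / (v * v) \<le> 1 / (n0 * q ^ 2)"
      unfolding qv using vpos gpos n0p cb
      by (simp add: field_simps power2_eq_square power4_eq_xxxx)
    then show ?thesis using cardGB vpos by (simp add: diff_divide_distrib)
  qed
  show ?thesis using main goalset cardS
    unfolding S_def V_def v_def n0_def by simp
qed

theorem lemma3:
  fixes p n N :: nat and v1 v2 :: "int list" and A :: "int list \<Rightarrow> int" and q :: real
  assumes "prime p" and "n \<ge> 3" and "N > 0"
    and "v1 \<in> vecs p (dimT (n - 1))" and "v2 \<in> vecs p (dimT (n - 1))"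
    and "q = real (card {U \<in> vecs p (dimT (n - 1)). A U = Zm N p (n - 1) U})
             / real (card (vecs p (dimT (n - 1))))"
    and "q > 0"
  shows "real (card {(K, M) \<in> vecs p (dimT (n - 1)) \<times> vecs p (dimT (n - 1)).
             real (card {x \<in> {3..int p}. A (Dvec p v1 v2 K M x) = Zm N p (n - 1) (Dvec p v1 v2 K M x)})
               \<ge> (real p - 2) * q / 2})
         / real (card (vecs p (dimT (n - 1)) \<times> vecs p (dimT (n - 1))))
         \<ge> 1 - 1 / ((real p - 2) * q ^ 2)"
proof -
  have lv: "length v1 = dimT (n - 1)" using assms(4) by (simp add: vecs_def)
  show ?thesis
    by (rule main_abstract[where P = "\<lambda>U. A U = Zm N p (n - 1) U", OF assms(1) lv assms(6,7)])
qed

end
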